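(* Fix a constant $p>2$ and a bounded open subset $\Omega\subset\mathbb{R}^2$ with area $|\Omega|$. Then for every integer $k\ge1$ there is a constant $c=c(k,|\Omega|)$ such that $$\|\partial_tu\cdot v\|_{\mathcal{W}^{k,p}}\le c\big(\|\partial_tu\|_{\mathcal{W}^{k,p}}\|v\|_\infty+\|u\|_{\mathcal{C}^k}\|v\|_{\mathcal{W}^{k,p}}\big)$$ for all functions $u,v\in C^\infty(\overline\Omega)$.
   Context: Coordinates on $\mathbb{R}^2$ are $(s,t)$. All norms are over $\Omega$: $\|w\|_{\mathcal{W}^{k,p}}=\big(\int_\Omega\sum_{2\nu+\mu\le2k}|\partial_s^\nu\partial_t^\mu w|^p\big)^{1/p}$ and the parabolic $\mathcal{C}^k$ norm is $\|w\|_{\mathcal{C}^k}=\sum_{2\nu+\mu\le2k}\|\partial_s^\nu\partial_t^\mu w\|_\infty$. *)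

theory Defs
  imports "HOL-Analysis.Analysis"
begin

definition pd_s :: "(real \<times> real \<Rightarrow> real) \<Rightarrow> real \<times> real \<Rightarrow> real" where
  "pd_s f = (\<lambda>(s,t). deriv (\<lambda>x. f (x,t)) s)"

definition pd_t :: "(real \<times> real \<Rightarrow> real) \<Rightarrow> real \<times> real \<Rightarrow> real" where
  "pd_t f = (\<lambda>(s,t). deriv (\<lambda>y. f (s,y)) t)"

fun pd_list :: "bool list \<Rightarrow> (real \<times> real \<Rightarrow> real) \<Rightarrow> real \<times> real \<Rightarrow> real" where
  "pd_list [] f = f"
| "pd_list (b # bs) f = (if b then pd_s else pd_t) (pd_list bs f)"

definition pd :: "nat \<Rightarrow> nat \<Rightarrow> (real \<times> real \<Rightarrow> real) \<Rightarrow> real \<times> real \<Rightarrow> real" where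
  "pd \<nu> \<mu> w = (pd_s ^^ \<nu>) ((pd_t ^^ \<mu>) w)"

definition smooth_on :: "(real \<times> real) set \<Rightarrow> (real \<times> real \<Rightarrow> real) \<Rightarrow> bool" where
  "smooth_on U f \<longleftrightarrow> (\<forall>bs. pd_list bs f differentiable_on U)"

definition smooth_closure :: "(real \<times> real) set \<Rightarrow> (real \<times> real \<Rightarrow> real) \<Rightarrow> bool" where
  "smooth_closure \<Omega> f \<longleftrightarrow> (\<exists>U. open U \<and> closure \<Omega> \<subseteq> U \<and> smooth_on U f)"

definition W_norm :: "nat \<Rightarrow> real \<Rightarrow> (real \<times> real) set \<Rightarrow> (real \<times> real \<Rightarrow> real) \<Rightarrow> real" where
  "W_norm k p \<Omega> w =
     (LINT x:\<Omega>|lborel. (\<Sum>(\<nu>,\<mu>)\<in>{(\<nu>,\<mu>). 2*\<nu> + \<mu> \<le> 2*k}. \<bar>pd \<nu> \<mu> w x\<bar> powr p)) powr (1/p)"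

definition sup_norm :: "(real \<times> real) set \<Rightarrow> (real \<times> real \<Rightarrow> real) \<Rightarrow> real" where
  "sup_norm \<Omega> w = (SUP x\<in>\<Omega>. \<bar>w x\<bar>)"

definition C_norm :: "nat \<Rightarrow> (real \<times> real) set \<Rightarrow> (real \<times> real \<Rightarrow> real) \<Rightarrow> real" where
  "C_norm k \<Omega> w = (\<Sum>(\<nu>,\<mu>)\<in>{(\<nu>,\<mu>). 2*\<nu> + \<mu> \<le> 2*k}. sup_norm \<Omega> (pd \<nu> \<mu> w))"

end

theory Submission
  imports Defs
begin

abbreviation D :: "bool \<Rightarrow> (real \<times> real \<Rightarrow> real) \<Rightarrow> real \<times> real \<Rightarrow> real" where
  "D b \<equiv> (if b then pd_s else pd_t)"

definition emb :: "bool \<Rightarrow> real \<times> real \<Rightarrow> real \<Rightarrow> real \<times> real" where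
  "emb b x a = (if b then (a, snd x) else (fst x, a))"
definition crd :: "bool \<Rightarrow> real \<times> real \<Rightarrow> real" where
  "crd b x = (if b then fst x else snd x)"

lemma D_eq: "D b h x = deriv (\<lambda>a. h (emb b x a)) (crd b x)"
  by (cases x) (simp add: pd_s_def pd_t_def emb_def crd_def)

lemma emb_crd: "emb b x (crd b x) = x"
  by (simp add: emb_def crd_def)

lemma emb_diff: "emb b x differentiable (at a)"
  unfolding emb_def by (cases b) (auto intro!: derivative_intros)

lemma emb_cont: "continuous_on UNIV (emb b x)"
  unfolding emb_def by (cases b) (auto intro!: continuous_intros)

lemma D_has:
  assumes "h differentiable (at x)"
  shows "((\<lambda>a. h (emb b x a)) has_real_derivative D b h x) (at (crd b x))"
proof -
  have "((\<lambda>a. h (emb b x a))) differentiable (at (crd b x))"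
    using differentiable_chain_at[OF emb_diff[of b x "crd b x"], of h] assms
    by (simp add: emb_crd o_def)
  then show ?thesis unfolding D_eq by (simp add: DERIV_deriv_iff_real_differentiable)
qed

lemma D_local:
  assumes "open U" "x \<in> U" "\<And>y. y \<in> U \<Longrightarrow> F y = G y"
  shows "D b F x = D b G x"
proof -
  have o: "open (emb b x -` U)"
    using open_vimage[OF assms(1) emb_cont] by simp
  have "crd b x \<in> emb b x -` U" using assms(2) by (simp add: emb_crd)
  then have "eventually (\<lambda>a. emb b x a \<in> U) (nhds (crd b x))"
    using o eventually_nhds by blast
  then have "eventually (\<lambda>a. F (emb b x a) = G (emb b x a)) (nhds (crd b x))"
    by eventually_elim (simp add: assms(3))
  then show ?thesis unfolding D_eq by (rule deriv_cong_ev) simp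
qed

lemma D_sum_prod:
  assumes "finite S" "\<And>c. c \<in> S \<Longrightarrow> F c differentiable (at x)"
    "\<And>c. c \<in> S \<Longrightarrow> G c differentiable (at x)"
  shows "D b (\<lambda>y. \<Sum>c\<in>S. F c y * G c y) x = (\<Sum>c\<in>S. D b (F c) x * G c x + F c x * D b (G c) x)"
proof -
  have "((\<lambda>a. \<Sum>c\<in>S. F c (emb b x a) * G c (emb b x a)) has_real_derivative
      (\<Sum>c\<in>S. D b (F c) x * G c x + F c x * D b (G c) x)) (at (crd b x))"
  proof (rule DERIV_sum)
    fix c assume c: "c \<in> S"
    from DERIV_mult[OF D_has[OF assms(2)[OF c]] D_has[OF assms(3)[OF c]], of b]
    show "((\<lambda>a. F c (emb b x a) * G c (emb b x a)) has_real_derivative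
      D b (F c) x * G c x + F c x * D b (G c) x) (at (crd b x))"
      by (simp add: emb_crd algebra_simps)
  qed
  then show ?thesis unfolding D_eq[of b _ x] by (rule DERIV_imp_deriv)
qed

fun sel :: "bool list \<Rightarrow> bool list \<Rightarrow> bool list" where
  "sel (b#bs) (c#cs) = (if c then b # sel bs cs else sel bs cs)"
| "sel _ _ = []"

lemma fin_lists: "finite {cs::bool list. length cs = n}"
  using finite_lists_length_eq[of "UNIV::bool set" n] by simp

lemma card_lists: "card {cs::bool list. length cs = n} = 2 ^ n"
  using card_lists_length_eq[of "UNIV::bool set" n] by simp

lemma lists_Suc: "{cs::bool list. length cs = Suc n} = Cons True ` {cs. length cs = n} \<union> Cons False ` {cs. length cs = n}"
  by (auto simp: length_Suc_conv)

lemma sum_lists_Suc: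
  "(\<Sum>cs\<in>{cs::bool list. length cs = Suc n}. F cs) =
   (\<Sum>cs\<in>{cs. length cs = n}. F (True#cs)) + (\<Sum>cs\<in>{cs. length cs = n}. F (False#cs))"
proof -
  have fin: "finite {cs::bool list. length cs = n}" by (rule fin_lists)
  have d: "Cons True ` {cs. length cs = n} \<inter> Cons False ` {cs. length cs = n} = {}" by auto
  have u: "sum F (Cons True ` {cs. length cs = n} \<union> Cons False ` {cs. length cs = n})
      = sum F (Cons True ` {cs. length cs = n}) + sum F (Cons False ` {cs. length cs = n})"
    by (rule sum.union_disjoint) (use fin d in auto)
  have t: "sum F (Cons True ` {cs. length cs = n}) = (\<Sum>cs\<in>{cs. length cs = n}. F (True#cs))"
    by (subst sum.reindex) (auto simp: inj_on_def)
  have f: "sum F (Cons False ` {cs. length cs = n}) = (\<Sum>cs\<in>{cs. length cs = n}. F (False#cs))"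
    by (subst sum.reindex) (auto simp: inj_on_def)
  show ?thesis unfolding lists_Suc u t f ..
qed

lemma diff_at: "f differentiable_on U \<Longrightarrow> open U \<Longrightarrow> x \<in> U \<Longrightarrow> f differentiable (at x)"
  using at_within_open[of x U] unfolding differentiable_on_def by metis

lemma tst: "(\<Sum>cs\<in>{cs. length cs = length bs}. D b (pd_list (sel bs cs) f) x * pd_list (sel bs (map Not cs)) g x
       + pd_list (sel bs cs) f x * D b (pd_list (sel bs (map Not cs)) g) x) = (\<Sum>cs\<in>{cs. length cs = length (b#bs)}. pd_list (sel (b#bs) cs) f x * pd_list (sel (b#bs) (map Not cs)) g x)"
proof -
  have "(\<Sum>cs\<in>{cs. length cs = Suc (length bs)}. pd_list (sel (b#bs) cs) f x * pd_list (sel (b#bs) (map Not cs)) g x)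
   = (\<Sum>cs\<in>{cs. length cs = length bs}. pd_list (sel (b#bs) (True#cs)) f x * pd_list (sel (b#bs) (map Not (True#cs))) g x)
   + (\<Sum>cs\<in>{cs. length cs = length bs}. pd_list (sel (b#bs) (False#cs)) f x * pd_list (sel (b#bs) (map Not (False#cs))) g x)"
    by (rule sum_lists_Suc)
  also have "\<dots> = (\<Sum>cs\<in>{cs. length cs = length bs}. D b (pd_list (sel bs cs) f) x * pd_list (sel bs (map Not cs)) g x)
      + (\<Sum>cs\<in>{cs. length cs = length bs}. pd_list (sel bs cs) f x * D b (pd_list (sel bs (map Not cs)) g) x)"
    by (simp only: sel.simps list.map pd_list.simps if_True if_False not_True_eq_False not_False_eq_True)
  finally show ?thesis by (simp only: length_Cons sum.distrib)
qed

lemma leibniz: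
  assumes U: "open U" and f: "\<forall>bs. pd_list bs f differentiable_on U"
    and g: "\<forall>bs. pd_list bs g differentiable_on U"
  shows "x \<in> U \<Longrightarrow> pd_list bs (\<lambda>y. f y * g y) x =
    (\<Sum>cs\<in>{cs. length cs = length bs}. pd_list (sel bs cs) f x * pd_list (sel bs (map Not cs)) g x)"
proof (induction bs arbitrary: x)
  case Nil
  have "{cs::bool list. length cs = 0} = {[]}" by auto
  then show ?case by simp
next
  case (Cons b bs)
  have fin: "finite {cs::bool list. length cs = length bs}" by (rule fin_lists)
  have "pd_list (b#bs) (\<lambda>y. f y * g y) x = D b (pd_list bs (\<lambda>y. f y * g y)) x" by simp
  also have "\<dots> = D b (\<lambda>y. \<Sum>cs\<in>{cs. length cs = length bs}. pd_list (sel bs cs) f y * pd_list (sel bs (map Not cs)) g y) x"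
    by (rule D_local[OF U Cons.prems]) (rule Cons.IH)
  also have "\<dots> = (\<Sum>cs\<in>{cs. length cs = length bs}. D b (pd_list (sel bs cs) f) x * pd_list (sel bs (map Not cs)) g x
       + pd_list (sel bs cs) f x * D b (pd_list (sel bs (map Not cs)) g) x)"
    by (rule D_sum_prod[OF fin]) (auto intro!: diff_at[OF _ U Cons.prems] f[rule_format] g[rule_format])
  also have "\<dots> = (\<Sum>cs\<in>{cs. length cs = length (b#bs)}. pd_list (sel (b#bs) cs) f x * pd_list (sel (b#bs) (map Not cs)) g x)"
    using tst[where bs=bs and b=b and f=f and g=g and x=x] by assumption
  finally show ?case .
qed


lemma pd_list_append: "pd_list (xs @ ys) f = pd_list xs (pd_list ys f)"
  by (induction xs) auto

lemma pd_list_rep: "pd_list (replicate j True @ replicate i False) f = pd j i f"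
proof -
  have "pd_list (replicate i False) f = (pd_t ^^ i) f" by (induction i) auto
  then show ?thesis unfolding pd_def by (induction j) auto
qed

lemma pd_t_shift: "pd j i (pd_t u) = pd j (Suc i) u"
  unfolding pd_def by (simp add: funpow_swap1)

lemma sel_append: "sel (xs @ ys) cs = sel xs (take (length xs) cs) @ sel ys (drop (length xs) cs)"
proof (induction xs arbitrary: cs)
  case Nil then show ?case by simp
next
  case (Cons a xs) then show ?case by (cases cs) auto
qed

lemma sel_rep: "sel (replicate n b) cs = replicate (length (filter id (take n cs))) b"
proof (induction n arbitrary: cs)
  case 0 then show ?case by simp
next
  case (Suc n) then show ?case by (cases cs) auto
qed

lemma count_not: "length (filter Not xs) = length xs - length (filter id xs)"
proof -
  have "length (filter Not xs) + length (filter id xs) = length xs"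
    by (induction xs) auto
  then show ?thesis by linarith
qed

lemma sel_struct:
  assumes "length cs = \<nu> + \<mu>"
  shows "\<exists>j i. j \<le> \<nu> \<and> i \<le> \<mu> \<and>
    sel (replicate \<nu> True @ replicate \<mu> False) cs = replicate j True @ replicate i False \<and>
    sel (replicate \<nu> True @ replicate \<mu> False) (map Not cs) = replicate (\<nu> - j) True @ replicate (\<mu> - i) False"
proof -
  define j where "j = length (filter id (take \<nu> cs))"
  define i where "i = length (filter id (take \<mu> (drop \<nu> cs)))"
  have lt: "length (take \<nu> cs) = \<nu>" "length (take \<mu> (drop \<nu> cs)) = \<mu>" using assms by auto
  have "j \<le> \<nu>" unfolding j_def using length_filter_le[of id "take \<nu> cs"] lt by simp
  moreover have "i \<le> \<mu>" unfolding i_def using length_filter_le[of id "take \<mu> (drop \<nu> cs)"] lt by simp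
  moreover have "sel (replicate \<nu> True @ replicate \<mu> False) cs = replicate j True @ replicate i False"
    unfolding sel_append sel_rep j_def i_def by simp
  moreover have "sel (replicate \<nu> True @ replicate \<mu> False) (map Not cs) = replicate (\<nu> - j) True @ replicate (\<mu> - i) False"
    unfolding sel_append sel_rep j_def i_def by (simp add: take_map drop_map count_not lt assms)
  ultimately show ?thesis by blast
qed

lemma powr_add_le:
  fixes a b p :: real
  assumes "a \<ge> 0" "b \<ge> 0" "p > 0"
  shows "(a + b) powr p \<le> 2 powr p * (a powr p + b powr p)"
proof -
  have "(a + b) powr p \<le> (2 * max a b) powr p"
    by (rule powr_mono2) (use assms in auto)
  also have "\<dots> = 2 powr p * max a b powr p"
    using assms by (simp add: powr_mult)
  also have "max a b powr p \<le> a powr p + b powr p"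
    by (cases "a \<le> b") (auto simp: max_def)
  then have "2 powr p * max a b powr p \<le> 2 powr p * (a powr p + b powr p)"
    by (rule mult_left_mono) simp
  finally show ?thesis .
qed

lemma powr_sum_le:
  fixes y :: "'a \<Rightarrow> real" and p :: real
  assumes "p > 0" "finite F" "\<And>i. i \<in> F \<Longrightarrow> y i \<ge> 0"
  shows "(\<Sum>i\<in>F. y i) powr p \<le> (2 powr p) ^ card F * (\<Sum>i\<in>F. y i powr p)"
  using assms(2,3)
proof (induction F rule: finite_induct)
  case empty then show ?case by simp
next
  case (insert a F)
  have C1: "(2::real) powr p \<ge> 1" using assms(1) by (simp add: ge_one_powr_ge_zero)
  have s0: "(\<Sum>i\<in>F. y i) \<ge> 0" using insert by (auto intro: sum_nonneg)
  have s1: "(\<Sum>i\<in>F. y i powr p) \<ge> 0" by (auto intro: sum_nonneg)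
  have IH: "(\<Sum>i\<in>F. y i) powr p \<le> (2 powr p) ^ card F * (\<Sum>i\<in>F. y i powr p)" using insert by auto
  have "(\<Sum>i\<in>insert a F. y i) powr p = (y a + (\<Sum>i\<in>F. y i)) powr p" using insert by simp
  also have "\<dots> \<le> 2 powr p * (y a powr p + (\<Sum>i\<in>F. y i) powr p)"
    by (rule powr_add_le) (use insert s0 assms(1) in auto)
  also have "\<dots> \<le> 2 powr p * (y a powr p + (2 powr p) ^ card F * (\<Sum>i\<in>F. y i powr p))"
    using IH by (intro mult_left_mono add_left_mono) auto
  also have "\<dots> \<le> 2 powr p * ((2 powr p) ^ card F * y a powr p + (2 powr p) ^ card F * (\<Sum>i\<in>F. y i powr p))"
  proof -
    have "y a powr p \<le> (2 powr p) ^ card F * y a powr p"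
      using C1 one_le_power[OF C1, of "card F"] by (simp add: mult_le_cancel_right1)
    then show ?thesis by (intro mult_left_mono add_right_mono) auto
  qed
  also have "\<dots> = (2 powr p) ^ card (insert a F) * (\<Sum>i\<in>insert a F. y i powr p)"
    using insert by (simp add: algebra_simps)
  finally show ?case .
qed


lemma finite_I: "finite {(\<nu>::nat, \<mu>::nat). 2*\<nu> + \<mu> \<le> 2*k}"
  by (rule finite_subset[of _ "{..k} \<times> {..2*k}"]) auto

lemma pointwise:
  fixes u v :: "real \<times> real \<Rightarrow> real"
  assumes Uo: "open U" and su: "\<forall>bs. pd_list bs u differentiable_on U"
    and sv: "\<forall>bs. pd_list bs v differentiable_on U" and xU: "x \<in> U"
    and hV: "\<bar>v x\<bar> \<le> V" and hC: "\<And>a b. 2*a + b \<le> 2*k \<Longrightarrow> \<bar>pd a b u x\<bar> \<le> Cu"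
    and al: "2*\<nu> + \<mu> \<le> 2*k"
  shows "\<bar>pd \<nu> \<mu> (\<lambda>y. pd_t u y * v y) x\<bar> \<le>
     2^(2*k) * (\<bar>pd \<nu> \<mu> (pd_t u) x\<bar> * V + Cu * (\<Sum>(a,b)\<in>{(\<nu>::nat, \<mu>::nat). 2*\<nu> + \<mu> \<le> 2*k}. \<bar>pd a b v x\<bar>))"
proof -
  define bs where "bs = replicate \<nu> True @ replicate \<mu> False"
  define w where "w = pd_t u"
  define S where "S = (\<Sum>(a,b)\<in>{(\<nu>::nat, \<mu>::nat). 2*\<nu> + \<mu> \<le> 2*k}. \<bar>pd a b v x\<bar>)"
  define B where "B = \<bar>pd \<nu> \<mu> w x\<bar> * V + Cu * S"
  have sw: "\<forall>bs. pd_list bs w differentiable_on U"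
  proof
    fix bs
    have "pd_list bs w = pd_list (bs @ [False]) u" unfolding w_def pd_list_append by simp
    then show "pd_list bs w differentiable_on U" using su by simp
  qed
  have V0: "V \<ge> 0" using hV by linarith
  have C0: "Cu \<ge> 0" using hC[of 0 0] by linarith
  have S0: "S \<ge> 0" unfolding S_def by (auto intro!: sum_nonneg)
  have B0: "B \<ge> 0" unfolding B_def using V0 C0 S0 by auto
  have lenbs: "length bs = \<nu> + \<mu>" unfolding bs_def by simp
  have eq: "pd \<nu> \<mu> (\<lambda>y. w y * v y) x = (\<Sum>cs\<in>{cs. length cs = \<nu> + \<mu>}.
      pd_list (sel bs cs) w x * pd_list (sel bs (map Not cs)) v x)"
    unfolding pd_list_rep[symmetric] bs_def[symmetric] lenbs[symmetric]
    by (rule leibniz[OF Uo sw sv xU])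
  have trm: "\<bar>pd_list (sel bs cs) w x * pd_list (sel bs (map Not cs)) v x\<bar> \<le> B"
    if cs: "cs \<in> {cs. length cs = \<nu> + \<mu>}" for cs
  proof -
    obtain j i where ji: "j \<le> \<nu>" "i \<le> \<mu>"
      "sel bs cs = replicate j True @ replicate i False"
      "sel bs (map Not cs) = replicate (\<nu> - j) True @ replicate (\<mu> - i) False"
      using sel_struct[of cs \<nu> \<mu>] cs unfolding bs_def by auto
    have T: "pd_list (sel bs cs) w x * pd_list (sel bs (map Not cs)) v x = pd j i w x * pd (\<nu> - j) (\<mu> - i) v x"
      unfolding ji pd_list_rep ..
    show ?thesis
    proof (cases "j = \<nu> \<and> i = \<mu>")
      case True
      then have "\<bar>pd j i w x * pd (\<nu> - j) (\<mu> - i) v x\<bar> = \<bar>pd \<nu> \<mu> w x\<bar> * \<bar>v x\<bar>"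
        by (simp add: pd_def abs_mult)
      also have "\<dots> \<le> \<bar>pd \<nu> \<mu> w x\<bar> * V" using hV by (intro mult_left_mono) auto
      also have "\<dots> \<le> B" unfolding B_def using C0 S0 by simp
      finally show ?thesis unfolding T .
    next
      case False
      then have "2*j + Suc i \<le> 2*k" using ji(1,2) al by auto
      then have h1: "\<bar>pd j i w x\<bar> \<le> Cu" unfolding w_def pd_t_shift by (rule hC)
      have "(\<nu> - j, \<mu> - i) \<in> {(\<nu>::nat, \<mu>::nat). 2*\<nu> + \<mu> \<le> 2*k}" using al ji by auto
      then have h2: "\<bar>pd (\<nu> - j) (\<mu> - i) v x\<bar> \<le> S" unfolding S_def
        using member_le_sum[of "(\<nu> - j, \<mu> - i)" "{(\<nu>::nat, \<mu>::nat). 2*\<nu> + \<mu> \<le> 2*k}" "\<lambda>(a,b). \<bar>pd a b v x\<bar>"]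
          finite_I[of k] by auto
      have "\<bar>pd j i w x * pd (\<nu> - j) (\<mu> - i) v x\<bar> \<le> Cu * S"
        unfolding abs_mult using h1 h2 C0 by (intro mult_mono) auto
      also have "\<dots> \<le> B" unfolding B_def using V0 by simp
      finally show ?thesis unfolding T .
    qed
  qed
  have "\<bar>pd \<nu> \<mu> (\<lambda>y. w y * v y) x\<bar> \<le> (\<Sum>cs\<in>{cs. length cs = \<nu> + \<mu>}.
      \<bar>pd_list (sel bs cs) w x * pd_list (sel bs (map Not cs)) v x\<bar>)"
    unfolding eq by (rule sum_abs)
  also have "\<dots> \<le> (\<Sum>cs\<in>{cs::bool list. length cs = \<nu> + \<mu>}. B)"
    by (rule sum_mono) (rule trm)
  also have "\<dots> = 2 ^ (\<nu> + \<mu>) * B" by (simp add: card_lists)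
  also have "\<dots> \<le> 2 ^ (2*k) * B"
    using B0 al by (intro mult_right_mono power_increasing) auto
  finally show ?thesis unfolding B_def S_def w_def .
qed


lemma cont_pd:
  assumes "\<forall>bs. pd_list bs f differentiable_on U" "closure \<Omega> \<subseteq> U"
  shows "continuous_on (closure \<Omega>) (pd a b f)"
proof -
  have "pd_list (replicate a True @ replicate b False) f differentiable_on U" using assms(1) by blast
  then have "continuous_on U (pd a b f)" unfolding pd_list_rep by (rule differentiable_imp_continuous_on)
  then show ?thesis using assms(2) by (rule continuous_on_subset)
qed

lemma bdd_abs:
  fixes \<Omega> :: "(real \<times> real) set" and g :: "real \<times> real \<Rightarrow> real"
  assumes "bounded \<Omega>" "continuous_on (closure \<Omega>) g"
  shows "bdd_above ((\<lambda>x. \<bar>g x\<bar>) ` \<Omega>)"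
proof -
  have cc: "compact (closure \<Omega>)" using assms(1) by simp
  have "compact (g ` closure \<Omega>)"
    by (rule compact_continuous_image[OF assms(2) cc])
  then have "bounded (g ` closure \<Omega>)" by (rule compact_imp_bounded)
  then obtain B where B: "\<forall>y\<in>g ` closure \<Omega>. norm y \<le> B"
    unfolding bounded_iff by blast
  have "\<bar>g x\<bar> \<le> B" if x: "x \<in> \<Omega>" for x
  proof -
    have "x \<in> closure \<Omega>" using closure_subset x by blast
    then have "norm (g x) \<le> B" using B by blast
    then show ?thesis by simp
  qed
  then show ?thesis by (intro bdd_aboveI2) blast
qed

lemma sup_ge:
  fixes \<Omega> :: "(real \<times> real) set" and g :: "real \<times> real \<Rightarrow> real"
  assumes "bounded \<Omega>" "continuous_on (closure \<Omega>) g" "x \<in> \<Omega>"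
  shows "\<bar>g x\<bar> \<le> sup_norm \<Omega> g"
  unfolding sup_norm_def by (rule cSUP_upper[OF assms(3) bdd_abs[OF assms(1,2)]])

lemma Fcont:
  fixes p :: real
  assumes "p > 0" "\<And>a b. continuous_on S (pd a b f)"
  shows "continuous_on S (\<lambda>x. \<Sum>(a,b)\<in>{(\<nu>::nat, \<mu>::nat). 2*\<nu> + \<mu> \<le> 2*k}. \<bar>pd a b f x\<bar> powr p)"
  unfolding split_def
  by (intro continuous_on_sum continuous_on_powr' continuous_on_rabs assms continuous_on_const) (use assms(1) in auto)

lemma Fint:
  assumes "bounded \<Omega>" "open \<Omega>" "continuous_on (closure \<Omega>) F"
  shows "set_integrable lborel \<Omega> (F :: real \<times> real \<Rightarrow> real)"
proof -
  have "set_integrable lborel (closure \<Omega>) F"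
    unfolding set_integrable_def
    using assms by (intro borel_integrable_compact) (auto simp: compact_closure)
  then show ?thesis
    by (rule set_integrable_subset) (use assms(2) closure_subset in auto)
qed


lemma pd00: "pd 0 0 f = f" by (simp add: pd_def)

lemma main_bound:
  fixes p :: real and \<Omega> :: "(real \<times> real) set" and u v :: "real \<times> real \<Rightarrow> real"
  assumes p: "p > 2" and \<Omega>o: "open \<Omega>" and \<Omega>b: "bounded \<Omega>" and ne: "\<Omega> \<noteq> {}"
    and su: "smooth_closure \<Omega> u" and sv: "smooth_closure \<Omega> v"
  shows "W_norm k p \<Omega> (\<lambda>x. pd_t u x * v x) \<le>
    (2 * (((2::real)^(2*k)) powr p * 2 powr p * real (card {(\<nu>::nat, \<mu>::nat). 2*\<nu> + \<mu> \<le> 2*k})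
          * (2 powr p) ^ card {(\<nu>::nat, \<mu>::nat). 2*\<nu> + \<mu> \<le> 2*k})) powr (1/p)
     * (W_norm k p \<Omega> (pd_t u) * sup_norm \<Omega> v + C_norm k \<Omega> u * W_norm k p \<Omega> v)"
proof -
  have p0: "p > 0" using p by simp
  obtain U1 where U1: "open U1" "closure \<Omega> \<subseteq> U1" "\<forall>bs. pd_list bs u differentiable_on U1"
    using su unfolding smooth_closure_def smooth_on_def by blast
  obtain U2 where U2: "open U2" "closure \<Omega> \<subseteq> U2" "\<forall>bs. pd_list bs v differentiable_on U2"
    using sv unfolding smooth_closure_def smooth_on_def by blast
  define U where "U = U1 \<inter> U2"
  have Uo: "open U" unfolding U_def using U1 U2 by auto
  have cU: "closure \<Omega> \<subseteq> U" unfolding U_def using U1 U2 by auto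
  have \<Omega>U: "\<Omega> \<subseteq> U" using cU closure_subset by blast
  have su': "\<forall>bs. pd_list bs u differentiable_on U"
    using U1(3) unfolding U_def by (auto intro: differentiable_on_subset)
  have sv': "\<forall>bs. pd_list bs v differentiable_on U"
    using U2(3) unfolding U_def by (auto intro: differentiable_on_subset)
  define I where "I = {(\<nu>::nat, \<mu>::nat). 2*\<nu> + \<mu> \<le> 2*k}"
  have finI: "finite I" unfolding I_def by (rule finite_I)
  have I00: "(0,0) \<in> I" unfolding I_def by simp
  have N1: "real (card I) \<ge> 1" using finI I00 card_gt_0_iff[of I] by auto
  obtain x0 where x0: "x0 \<in> \<Omega>" using ne by blast
  define V where "V = sup_norm \<Omega> v"
  define Cu where "Cu = C_norm k \<Omega> u"
  have cu: "\<And>a b. continuous_on (closure \<Omega>) (pd a b u)" by (rule cont_pd[OF U1(3,2)])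
  have cv: "\<And>a b. continuous_on (closure \<Omega>) (pd a b v)" by (rule cont_pd[OF U2(3,2)])
  have cw: "\<And>a b. continuous_on (closure \<Omega>) (pd a b (pd_t u))" unfolding pd_t_shift by (rule cu)
  have hV: "\<bar>v x\<bar> \<le> V" if "x \<in> \<Omega>" for x
    using sup_ge[OF \<Omega>b cv[of 0 0] that] unfolding pd00 V_def .
  have supnn: "sup_norm \<Omega> (pd a b u) \<ge> 0" for a b
    using sup_ge[OF \<Omega>b cu[of a b] x0] by linarith
  have hC: "\<bar>pd a b u x\<bar> \<le> Cu" if "x \<in> \<Omega>" "2*a + b \<le> 2*k" for a b x
  proof -
    have "\<bar>pd a b u x\<bar> \<le> sup_norm \<Omega> (pd a b u)" by (rule sup_ge[OF \<Omega>b cu that(1)])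
    also have "\<dots> \<le> Cu" unfolding Cu_def C_norm_def
      using member_le_sum[of "(a,b)" "{(\<nu>::nat, \<mu>::nat). 2*\<nu> + \<mu> \<le> 2*k}" "\<lambda>(a,b). sup_norm \<Omega> (pd a b u)"]
        finite_I[of k] that(2) supnn by auto
    finally show ?thesis .
  qed
  have V0: "V \<ge> 0" using hV[OF x0] by linarith
  have C0: "Cu \<ge> 0" using hC[OF x0, of 0 0] by linarith
  define Fw where "Fw = (\<lambda>x. \<Sum>(\<nu>,\<mu>)\<in>I. \<bar>pd \<nu> \<mu> (pd_t u) x\<bar> powr p)"
  define Fv where "Fv = (\<lambda>x. \<Sum>(\<nu>,\<mu>)\<in>I. \<bar>pd \<nu> \<mu> v x\<bar> powr p)"
  define Fwv where "Fwv = (\<lambda>x. \<Sum>(\<nu>,\<mu>)\<in>I. \<bar>pd \<nu> \<mu> (\<lambda>x. pd_t u x * v x) x\<bar> powr p)"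
  define L where "L = ((2::real)^(2*k)) powr p * 2 powr p"
  define CN where "CN = (2 powr p) ^ card I"
  define K where "K = L * real (card I) * CN"
  have L0: "L \<ge> 0" unfolding L_def by simp
  have CN1: "CN \<ge> 1" unfolding CN_def using p0 by (simp add: ge_one_powr_ge_zero)
  have Fw0: "Fw x \<ge> 0" for x unfolding Fw_def by (auto intro!: sum_nonneg)
  have Fv0: "Fv x \<ge> 0" for x unfolding Fv_def by (auto intro!: sum_nonneg)
  have Fwv0: "Fwv x \<ge> 0" for x unfolding Fwv_def by (auto intro!: sum_nonneg)
  have per: "\<bar>pd a b (\<lambda>x. pd_t u x * v x) x\<bar> powr p \<le>
      L * (V powr p * \<bar>pd a b (pd_t u) x\<bar> powr p + Cu powr p * (CN * Fv x))"
    if x: "x \<in> \<Omega>" and ab: "(a,b) \<in> I" for a b x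
  proof -
    define A where "A = \<bar>pd a b (pd_t u) x\<bar> * V"
    define S where "S = (\<Sum>(a,b)\<in>I. \<bar>pd a b v x\<bar>)"
    define Q where "Q = (2::real)^(2*k)"
    have A0: "A \<ge> 0" unfolding A_def using V0 by simp
    have S0: "S \<ge> 0" unfolding S_def by (auto intro!: sum_nonneg)
    have pw: "\<bar>pd a b (\<lambda>x. pd_t u x * v x) x\<bar> \<le> Q * (A + Cu * S)"
      unfolding Q_def A_def S_def I_def
      by (rule pointwise[OF Uo su' sv' _ hV[OF x] hC[OF x]]) (use x \<Omega>U ab I_def in auto)
    have s1: "\<bar>pd a b (\<lambda>x. pd_t u x * v x) x\<bar> powr p \<le> (Q * (A + Cu * S)) powr p"
      by (rule powr_mono2) (use pw p0 in auto)
    have s2: "(Q * (A + Cu * S)) powr p = Q powr p * (A + Cu * S) powr p"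
      using A0 S0 C0 by (simp add: Q_def powr_mult)
    have s3: "(A + Cu * S) powr p \<le> 2 powr p * (A powr p + (Cu * S) powr p)"
      by (rule powr_add_le) (use A0 S0 C0 p0 in auto)
    have s4: "A powr p = V powr p * \<bar>pd a b (pd_t u) x\<bar> powr p"
      unfolding A_def using V0 by (simp add: powr_mult)
    have s5: "(Cu * S) powr p = Cu powr p * S powr p"
      using C0 S0 by (simp add: powr_mult)
    have s6: "S powr p \<le> CN * Fv x"
    proof -
      have "S powr p \<le> (2 powr p) ^ card I * (\<Sum>i\<in>I. (\<bar>pd (fst i) (snd i) v x\<bar>) powr p)"
        unfolding S_def split_def
        by (rule powr_sum_le[OF p0 finI]) simp
      then show ?thesis unfolding CN_def Fv_def split_def .
    qed
    have "(A + Cu * S) powr p \<le> 2 powr p * (V powr p * \<bar>pd a b (pd_t u) x\<bar> powr p + Cu powr p * (CN * Fv x))"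
    proof -
      have "Cu powr p * S powr p \<le> Cu powr p * (CN * Fv x)"
        using s6 by (intro mult_left_mono) auto
      then have "A powr p + (Cu * S) powr p \<le> V powr p * \<bar>pd a b (pd_t u) x\<bar> powr p + Cu powr p * (CN * Fv x)"
        unfolding s4 s5 by simp
      then have "2 powr p * (A powr p + (Cu * S) powr p) \<le> 2 powr p * (V powr p * \<bar>pd a b (pd_t u) x\<bar> powr p + Cu powr p * (CN * Fv x))"
        by (rule mult_left_mono) simp
      then show ?thesis using s3 by (rule order_trans[rotated])
    qed
    then have "Q powr p * (A + Cu * S) powr p \<le> Q powr p * (2 powr p * (V powr p * \<bar>pd a b (pd_t u) x\<bar> powr p + Cu powr p * (CN * Fv x)))"
      by (intro mult_left_mono) auto
    from order_trans[OF s1[unfolded s2] this]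
    have fin: "\<bar>pd a b (\<lambda>x. pd_t u x * v x) x\<bar> powr p \<le> Q powr p * (2 powr p * (V powr p * \<bar>pd a b (pd_t u) x\<bar> powr p + Cu powr p * (CN * Fv x)))" .
    have eqn: "Q powr p * (2 powr p * (V powr p * \<bar>pd a b (pd_t u) x\<bar> powr p + Cu powr p * (CN * Fv x)))
        = L * (V powr p * \<bar>pd a b (pd_t u) x\<bar> powr p + Cu powr p * (CN * Fv x))"
      unfolding L_def Q_def by (simp only: mult.assoc)
    show ?thesis using ord_le_eq_trans[OF fin eqn] .
  qed
  have pt: "Fwv x \<le> K * (V powr p * Fw x + Cu powr p * Fv x)" if x: "x \<in> \<Omega>" for x
  proof -
    have "Fwv x \<le> (\<Sum>i\<in>I. L * (V powr p * \<bar>pd (fst i) (snd i) (pd_t u) x\<bar> powr p + Cu powr p * (CN * Fv x)))"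
      unfolding Fwv_def split_def
      by (rule sum_mono) (use per[OF x] in auto)
    also have "\<dots> = L * (V powr p * Fw x + real (card I) * (Cu powr p * (CN * Fv x)))"
      unfolding Fw_def split_def sum_distrib_left[symmetric] sum.distrib by simp
    also have "\<dots> \<le> K * (V powr p * Fw x + Cu powr p * Fv x)"
    proof -
      have X0: "V powr p * Fw x \<ge> 0" using Fw0 by simp
      have Y0: "Cu powr p * Fv x \<ge> 0" using Fv0 by simp
      have NC: "real (card I) * CN \<ge> 1" using mult_mono[OF N1 CN1] by simp
      have "V powr p * Fw x \<le> real (card I) * CN * (V powr p * Fw x)"
        using mult_right_mono[OF NC X0] by simp
      then have "V powr p * Fw x + real (card I) * (Cu powr p * (CN * Fv x))
          \<le> real (card I) * CN * (V powr p * Fw x + Cu powr p * Fv x)"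
        by (simp add: algebra_simps)
      then have "L * (V powr p * Fw x + real (card I) * (Cu powr p * (CN * Fv x)))
          \<le> L * (real (card I) * CN * (V powr p * Fw x + Cu powr p * Fv x))"
        by (rule mult_left_mono[OF _ L0])
      also have "\<dots> = K * (V powr p * Fw x + Cu powr p * Fv x)" unfolding K_def by (simp only: mult.assoc)
      finally show ?thesis .
    qed
    finally show ?thesis .
  qed
  have cFw: "continuous_on (closure \<Omega>) Fw" unfolding Fw_def I_def by (rule Fcont[OF p0 cw])
  have cFv: "continuous_on (closure \<Omega>) Fv" unfolding Fv_def I_def by (rule Fcont[OF p0 cv])
  have iFw: "set_integrable lborel \<Omega> Fw" by (rule Fint[OF \<Omega>b \<Omega>o cFw])
  have iFv: "set_integrable lborel \<Omega> Fv" by (rule Fint[OF \<Omega>b \<Omega>o cFv])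
  have iFw': "set_integrable lborel \<Omega> (\<lambda>x. V powr p * Fw x)" by (rule set_integrable_mult_right) (rule iFw)
  have iFv': "set_integrable lborel \<Omega> (\<lambda>x. Cu powr p * Fv x)" by (rule set_integrable_mult_right) (rule iFv)
  define G where "G = (\<lambda>x. K * (V powr p * Fw x + Cu powr p * Fv x))"
  have iG: "set_integrable lborel \<Omega> G" unfolding G_def
    by (rule set_integrable_mult_right) (rule set_integral_add(1)[OF iFw' iFv'])
  have K0: "K \<ge> 0" unfolding K_def using L0 CN1 by simp
  have G0: "G x \<ge> 0" for x unfolding G_def using K0 Fw0 Fv0 by simp
  define Iw where "Iw = (LINT x:\<Omega>|lborel. Fw x)"
  define Iv where "Iv = (LINT x:\<Omega>|lborel. Fv x)"
  define Iwv where "Iwv = (LINT x:\<Omega>|lborel. Fwv x)"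
  have Iw0: "Iw \<ge> 0" unfolding Iw_def set_lebesgue_integral_def
    by (rule Bochner_Integration.integral_nonneg) (simp add: Fw0)
  have Iv0: "Iv \<ge> 0" unfolding Iv_def set_lebesgue_integral_def
    by (rule Bochner_Integration.integral_nonneg) (simp add: Fv0)
  have Iwv0: "Iwv \<ge> 0" unfolding Iwv_def set_lebesgue_integral_def
    by (rule Bochner_Integration.integral_nonneg) (simp add: Fwv0)
  have I1: "Iwv \<le> (LINT x:\<Omega>|lborel. G x)"
    unfolding Iwv_def set_lebesgue_integral_def
  proof (rule integral_mono')
    show "integrable lborel (\<lambda>x. indicator \<Omega> x *\<^sub>R G x)" using iG unfolding set_integrable_def .
    fix x
    show "indicator \<Omega> x *\<^sub>R Fwv x \<le> indicator \<Omega> x *\<^sub>R G x"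
      by (cases "x \<in> \<Omega>") (auto simp: pt G_def)
    show "0 \<le> indicator \<Omega> x *\<^sub>R G x" using G0[of x] by simp
  qed
  have I2: "(LINT x:\<Omega>|lborel. G x) = K * (V powr p * Iw + Cu powr p * Iv)"
    unfolding G_def Iw_def Iv_def set_integral_mult_right set_integral_add(2)[OF iFw' iFv'] by simp
  define Ww where "Ww = Iw powr (1/p)"
  define Wv where "Wv = Iv powr (1/p)"
  define X where "X = Ww * V"
  define Y where "Y = Cu * Wv"
  have X0: "X \<ge> 0" unfolding X_def Ww_def using V0 by simp
  have Y0: "Y \<ge> 0" unfolding Y_def Wv_def using C0 by simp
  have hX: "X powr p = V powr p * Iw"
  proof -
    have "Ww powr p = Iw" unfolding Ww_def powr_powr using p0 Iw0 by (simp add: powr_one)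
    then show ?thesis unfolding X_def using V0 by (simp add: powr_mult Ww_def)
  qed
  have hY: "Y powr p = Cu powr p * Iv"
  proof -
    have "Wv powr p = Iv" unfolding Wv_def powr_powr using p0 Iv0 by (simp add: powr_one)
    then show ?thesis unfolding Y_def using C0 by (simp add: powr_mult Wv_def)
  qed
  have "X powr p \<le> (X + Y) powr p" by (rule powr_mono2) (use X0 Y0 p0 in auto)
  moreover have "Y powr p \<le> (X + Y) powr p" by (rule powr_mono2) (use X0 Y0 p0 in auto)
  ultimately have "K * (V powr p * Iw + Cu powr p * Iv) \<le> K * (2 * (X + Y) powr p)"
    unfolding hX[symmetric] hY[symmetric] using K0 by (intro mult_left_mono) auto
  then have "Iwv \<le> (2 * K) * (X + Y) powr p" using I1 I2 by simp
  then have "Iwv powr (1/p) \<le> ((2 * K) * (X + Y) powr p) powr (1/p)"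
    by (intro powr_mono2) (use Iwv0 p0 in auto)
  also have "\<dots> = (2 * K) powr (1/p) * (X + Y)"
    using K0 X0 Y0 p0 by (simp add: powr_mult powr_powr powr_one)
  finally have main: "Iwv powr (1/p) \<le> (2 * K) powr (1/p) * (Ww * V + Cu * Wv)"
    unfolding X_def Y_def .
  show ?thesis
    using main unfolding Iwv_def Fwv_def Ww_def Iw_def Fw_def Wv_def Iv_def Fv_def
      K_def L_def CN_def I_def V_def Cu_def W_norm_def .
qed


theorem mainTheorem9:
  fixes p :: real
  assumes "p > 2"
  shows "\<forall>k::nat. k \<ge> 1 \<longrightarrow> (\<forall>A::real. \<exists>c::real.
           \<forall>\<Omega> :: (real \<times> real) set. open \<Omega> \<and> bounded \<Omega> \<and> measure lborel \<Omega> = A \<longrightarrow>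
             (\<forall>u v. smooth_closure \<Omega> u \<and> smooth_closure \<Omega> v \<longrightarrow>
                W_norm k p \<Omega> (\<lambda>x. pd_t u x * v x)
                  \<le> c * (W_norm k p \<Omega> (pd_t u) * sup_norm \<Omega> v + C_norm k \<Omega> u * W_norm k p \<Omega> v)))"
proof (intro allI impI)
  fix k :: nat and A :: real
  assume "k \<ge> 1"
  show "\<exists>c::real. \<forall>\<Omega> :: (real \<times> real) set. open \<Omega> \<and> bounded \<Omega> \<and> measure lborel \<Omega> = A \<longrightarrow>
             (\<forall>u v. smooth_closure \<Omega> u \<and> smooth_closure \<Omega> v \<longrightarrow>
                W_norm k p \<Omega> (\<lambda>x. pd_t u x * v x)
                  \<le> c * (W_norm k p \<Omega> (pd_t u) * sup_norm \<Omega> v + C_norm k \<Omega> u * W_norm k p \<Omega> v))"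
  proof (rule exI[where x = "(2 * (((2::real)^(2*k)) powr p * 2 powr p * real (card {(\<nu>::nat, \<mu>::nat). 2*\<nu> + \<mu> \<le> 2*k})
          * (2 powr p) ^ card {(\<nu>::nat, \<mu>::nat). 2*\<nu> + \<mu> \<le> 2*k})) powr (1/p)"], intro allI impI)
    fix \<Omega> :: "(real \<times> real) set" and u v :: "real \<times> real \<Rightarrow> real"
    assume \<Omega>: "open \<Omega> \<and> bounded \<Omega> \<and> measure lborel \<Omega> = A"
      and uv: "smooth_closure \<Omega> u \<and> smooth_closure \<Omega> v"
    show "W_norm k p \<Omega> (\<lambda>x. pd_t u x * v x) \<le> (2 * (((2::real)^(2*k)) powr p * 2 powr p * real (card {(\<nu>::nat, \<mu>::nat). 2*\<nu> + \<mu> \<le> 2*k})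
          * (2 powr p) ^ card {(\<nu>::nat, \<mu>::nat). 2*\<nu> + \<mu> \<le> 2*k})) powr (1/p)
       * (W_norm k p \<Omega> (pd_t u) * sup_norm \<Omega> v + C_norm k \<Omega> u * W_norm k p \<Omega> v)"
    proof (cases "\<Omega> = {}")
      case True
      have "W_norm k p \<Omega> f = 0" for f unfolding W_norm_def True set_lebesgue_integral_def by simp
      then show ?thesis by simp
    next
      case False
      show ?thesis by (rule main_bound) (use assms \<Omega> uv False in auto)
    qed
  qed
qed

end
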